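(* Let $(V,\star,\alpha,1)$ be a unital hom-associative algebra of type $I_3$. Then it is also (a) of type $I_2$, (b) of type $II_2$, and (c) of type $II_3$.
   Context: Let $k$ be a commutative ring. A unital hom-associative algebra is a tuple $(V,\star,\alpha,1)$ where $V$ is a $k$-module, $\star:V\times V\to V$ is $k$-bilinear, $\alpha:V\to V$ is $k$-linear, and $1\in V$ satisfies $1\star x=x\star 1=x$ for all $x\in V$. It is of type $T$ if the identity for $T$ holds for all $x,y,z\in V$: $I_2$: $x\star(\alpha(y)\star z)=(x\star\alpha(y))\star z$; $I_3$: $x\star(y\star\alpha(z))=(\alpha(x)\star y)\star z$; $II_2$: $\alpha(x)\star(y\star\alpha(z))=(\alpha(x)\star y)\star\alpha(z)$; $II_3$: $\alpha(x)\star(\alpha(y)\star z)=(x\star\alpha(y))\star\alpha(z)$. *)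

theory Defs
  imports Main "HOL.Modules"
begin

definition unital_hom_assoc_algebra ::
  "('k::comm_ring_1 \<Rightarrow> 'v::ab_group_add \<Rightarrow> 'v) \<Rightarrow> ('v \<Rightarrow> 'v \<Rightarrow> 'v) \<Rightarrow> ('v \<Rightarrow> 'v) \<Rightarrow> 'v \<Rightarrow> bool"
where
  "unital_hom_assoc_algebra scale mult alpha one \<longleftrightarrow>
     module scale \<and>
     (\<forall>y. module_hom scale scale (\<lambda>x. mult x y)) \<and>
     (\<forall>x. module_hom scale scale (\<lambda>y. mult x y)) \<and>
     module_hom scale scale alpha \<and>
     (\<forall>x. mult one x = x \<and> mult x one = x)"

definition type_I2 :: "('v \<Rightarrow> 'v \<Rightarrow> 'v) \<Rightarrow> ('v \<Rightarrow> 'v) \<Rightarrow> bool" where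
  "type_I2 mult alpha \<longleftrightarrow>
     (\<forall>x y z. mult x (mult (alpha y) z) = mult (mult x (alpha y)) z)"

definition type_I3 :: "('v \<Rightarrow> 'v \<Rightarrow> 'v) \<Rightarrow> ('v \<Rightarrow> 'v) \<Rightarrow> bool" where
  "type_I3 mult alpha \<longleftrightarrow>
     (\<forall>x y z. mult x (mult y (alpha z)) = mult (mult (alpha x) y) z)"

definition type_II2 :: "('v \<Rightarrow> 'v \<Rightarrow> 'v) \<Rightarrow> ('v \<Rightarrow> 'v) \<Rightarrow> bool" where
  "type_II2 mult alpha \<longleftrightarrow>
     (\<forall>x y z. mult (alpha x) (mult y (alpha z)) = mult (mult (alpha x) y) (alpha z))"

definition type_II3 :: "('v \<Rightarrow> 'v \<Rightarrow> 'v) \<Rightarrow> ('v \<Rightarrow> 'v) \<Rightarrow> bool" where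
  "type_II3 mult alpha \<longleftrightarrow>
     (\<forall>x y z. mult (alpha x) (mult (alpha y) z) = mult (mult x (alpha y)) (alpha z))"

end

theory Submission
  imports Defs
begin

theorem proposition2p6:
  fixes scale :: "'k::comm_ring_1 \<Rightarrow> 'v::ab_group_add \<Rightarrow> 'v"
    and mult :: "'v \<Rightarrow> 'v \<Rightarrow> 'v" and alpha :: "'v \<Rightarrow> 'v" and one :: 'v
  assumes "unital_hom_assoc_algebra scale mult alpha one"
    and "type_I3 mult alpha"
  shows "type_I2 mult alpha \<and> type_II2 mult alpha \<and> type_II3 mult alpha"
proof -
  have I3: "\<And>x y z. mult x (mult y (alpha z)) = mult (mult (alpha x) y) z"
    using assms(2) unfolding type_I3_def by blast
  have u: "\<And>x. mult one x = x" "\<And>x. mult x one = x"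
    using assms(1) unfolding unital_hom_assoc_algebra_def by blast+
  have "type_I2 mult alpha" unfolding type_I2_def
    by (intro allI, metis I3 u(2) u(1))
  moreover have "type_II2 mult alpha" unfolding type_II2_def
    by (intro allI, metis I3 u(2) u(1))
  moreover have "type_II3 mult alpha" unfolding type_II3_def
    by (intro allI, metis I3 u(2) u(1))
  ultimately show ?thesis by blast
qed

end
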